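(* Let $X,Y$ be real Hilbert spaces and $a:X\times Y\to\mathbb{R}\cup\{+\infty\}$ such that for every $y\in Y$ the function $a(\cdot,y)$ is proper, lower semicontinuous and paraconvex on $X$, and for every $x\in X$ the function $a(x,\cdot)$ is concave on $Y$. Assume $\beta:=\inf_{x\in X}\sup_{y\in Y}a(x,y)<+\infty$. If there exist $y_1,y_2\in Y$ and $\bar x\in\mathrm{int}\,\mathrm{dom}\,a(\cdot,y_1)\cap\mathrm{int}\,\mathrm{dom}\,a(\cdot,y_2)$ with $a(\bar x,y_1)\ge\beta$, $a(\bar x,y_2)\ge\beta$ such that $a(\cdot,y_1)$ and $a(\cdot,y_2)$ satisfy $ZS(0,\bar x)$, then $\sup_{y\in Y}\inf_{x\in X}a(x,y)=\inf_{x\in X}\sup_{y\in Y}a(x,y)$.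
   Context: A function $f:X\to\mathbb{R}\cup\{+\infty\}$ is paraconvex if there is $c>0$ such that $f+c\|\cdot\|^2$ is convex; proper means $\mathrm{dom}(f)=\{x:f(x)<+\infty\}\ne\emptyset$ and $f$ is minorized by some function $x\mapsto-a\|x\|^2+\langle v,x\rangle+c$ with $a\ge0$, $v\in X^*$, $c\in\mathbb{R}$. $\partial_{lsc}f(\bar x)$ is the set of $(a,v)\in\mathbb{R}_+\times X^*$ with $f(x)-f(\bar x)\ge\langle v,x-\bar x\rangle-a\|x\|^2+a\|\bar x\|^2$ for all $x\in X$. Functions $f,g$ satisfy $ZS(0,\bar x)$ if $0=(0,0)\in\mathrm{co}(\partial_{lsc}f(\bar x)\cup\partial_{lsc}g(\bar x))$, convex hull in $\mathbb{R}\times X^*$. *)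

theory Defs
  imports "HOL-Analysis.Analysis"
begin

text \<open>Extended-real valued functions with values in R \<union> {+\<infinity>} are modelled as
  functions into ereal (never taking the value -\<infinity>, assumed separately).\<close>

definition ext_dom :: "('a \<Rightarrow> ereal) \<Rightarrow> 'a set" where
  "ext_dom f = {x. f x < \<infinity>}"

definition ext_convex :: "('a::real_vector \<Rightarrow> ereal) \<Rightarrow> bool" where
  "ext_convex f \<longleftrightarrow> (\<forall>x y. \<forall>u::real. 0 < u \<and> u < 1 \<longrightarrow>
      f (u *\<^sub>R x + (1 - u) *\<^sub>R y) \<le> ereal u * f x + ereal (1 - u) * f y)"

definition ext_concave :: "('a::real_vector \<Rightarrow> ereal) \<Rightarrow> bool" where
  "ext_concave f \<longleftrightarrow> (\<forall>x y. \<forall>u::real. 0 < u \<and> u < 1 \<longrightarrow>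
      ereal u * f x + ereal (1 - u) * f y \<le> f (u *\<^sub>R x + (1 - u) *\<^sub>R y))"

definition paraconvex :: "('a::real_normed_vector \<Rightarrow> ereal) \<Rightarrow> bool" where
  "paraconvex f \<longleftrightarrow> (\<exists>c>0. ext_convex (\<lambda>x. f x + ereal (c * (norm x)\<^sup>2)))"

text \<open>Proper: nonempty domain and minorized by a quadratic function
  (dual space identified with the Hilbert space via Riesz).\<close>
definition proper_fun :: "('a::real_inner \<Rightarrow> ereal) \<Rightarrow> bool" where
  "proper_fun f \<longleftrightarrow> ext_dom f \<noteq> {} \<and>
     (\<exists>a\<ge>0. \<exists>v c. \<forall>x. ereal (- a * (norm x)\<^sup>2 + inner v x + c) \<le> f x)"

definition lsc :: "('a::topological_space \<Rightarrow> ereal) \<Rightarrow> bool" where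
  "lsc f \<longleftrightarrow> (\<forall>t. closed {x. f x \<le> t})"

definition subdiff_lsc :: "('a::real_inner \<Rightarrow> ereal) \<Rightarrow> 'a \<Rightarrow> (real \<times> 'a) set" where
  "subdiff_lsc f xb = {(a, v). a \<ge> 0 \<and> (\<forall>x. f x - f xb \<ge>
       ereal (inner v (x - xb) - a * (norm x)\<^sup>2 + a * (norm xb)\<^sup>2))}"

definition ZS0 :: "('a::real_inner \<Rightarrow> ereal) \<Rightarrow> ('a \<Rightarrow> ereal) \<Rightarrow> 'a \<Rightarrow> bool" where
  "ZS0 f g xb \<longleftrightarrow> (0::real, 0::'a) \<in> convex hull (subdiff_lsc f xb \<union> subdiff_lsc g xb)"

end

theory Submission
  imports Defs
begin

lemma zs_key:
  fixes f g :: "'x::real_inner \<Rightarrow> ereal"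
  assumes fb: "f xb = ereal fb" and gb: "g xb = ereal gb"
    and zs: "ZS0 f g xb"
  shows "\<exists>t. 0 \<le> t \<and> t \<le> 1 \<and> (\<forall>x fx gx. (t \<noteq> 0 \<longrightarrow> f x = ereal fx) \<longrightarrow> (t \<noteq> 1 \<longrightarrow> g x = ereal gx)
            \<longrightarrow> 0 \<le> t * (fx - fb) + (1 - t) * (gx - gb))"
proof -
  let ?A = "subdiff_lsc f xb" and ?B = "subdiff_lsc g xb"
  from zs obtain S u where S: "finite S" "S \<subseteq> ?A \<union> ?B" "\<forall>s\<in>S. 0 \<le> u s" "sum u S = 1"
    "(\<Sum>v\<in>S. u v *\<^sub>R v) = (0::real, 0::'x)"
    unfolding ZS0_def convex_hull_explicit by blast
  define S1 where "S1 = S \<inter> ?A"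
  define S2 where "S2 = S - ?A"
  define t where "t = sum u S1"
  have fin1: "finite S1" and fin2: "finite S2" using S(1) by (auto simp: S1_def S2_def)
  have split: "sum h S = sum h S1 + sum h S2" for h :: "real \<times> 'x \<Rightarrow> real"
    unfolding S1_def S2_def using sum.Int_Diff[OF S(1)] by blast
  have t1: "sum u S2 = 1 - t" using split[of u] S(4) t_def by simp
  have t0: "0 \<le> t" unfolding t_def using S(3) by (auto simp: S1_def intro: sum_nonneg)
  have t0': "0 \<le> 1 - t" using S(3) t1 by (metis S2_def DiffD1 sum_nonneg)
  show ?thesis
  proof (intro exI conjI allI impI)
    show "0 \<le> t" by fact
    show "t \<le> 1" using t0' by simp
    fix x fx gx assume fx: "t \<noteq> 0 \<longrightarrow> f x = ereal fx" and gx: "t \<noteq> 1 \<longrightarrow> g x = ereal gx"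
    define \<phi> where "\<phi> s = inner (snd s) (x - xb) - fst s * (norm x)\<^sup>2 + fst s * (norm xb)\<^sup>2"
      for s :: "real \<times> 'x"
    have lin: "(\<Sum>s\<in>S. u s * \<phi> s) = 0"
    proof -
      have "(\<Sum>s\<in>S. u s * \<phi> s) = inner (\<Sum>s\<in>S. u s *\<^sub>R snd s) (x - xb)
          - (\<Sum>s\<in>S. u s * fst s) * (norm x)\<^sup>2 + (\<Sum>s\<in>S. u s * fst s) * (norm xb)\<^sup>2"
        by (simp add: \<phi>_def algebra_simps sum.distrib sum_subtractf inner_sum_left
            sum_distrib_right sum_distrib_left)
      moreover have "(\<Sum>s\<in>S. u s *\<^sub>R snd s) = 0" "(\<Sum>s\<in>S. u s * fst s) = 0"
        using arg_cong[OF S(5), of snd] arg_cong[OF S(5), of fst] by (simp_all add: fst_sum snd_sum)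
      ultimately show ?thesis by simp
    qed
    have A1: "\<phi> s \<le> fx - fb" if "s \<in> S1" "t \<noteq> 0" for s
    proof -
      obtain c v where s: "s = (c, v)" by force
      have "s \<in> ?A" using that by (simp add: S1_def)
      then have "ereal (\<phi> s) \<le> f x - f xb" by (auto simp: subdiff_lsc_def s \<phi>_def)
      then show ?thesis using fx fb that by simp
    qed
    have B1: "\<phi> s \<le> gx - gb" if "s \<in> S2" "t \<noteq> 1" for s
    proof -
      obtain c v where s: "s = (c, v)" by force
      have "s \<in> ?B" using that S(2) by (auto simp: S2_def)
      then have "ereal (\<phi> s) \<le> g x - g xb" by (auto simp: subdiff_lsc_def s \<phi>_def)
      then show ?thesis using gx gb that by simp
    qed
    have u1: "u s = 0" if "t = 0" "s \<in> S1" for s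
      using sum_nonneg_eq_0_iff[OF fin1, of u] S(3) that by (auto simp: t_def S1_def)
    have u2: "u s = 0" if "t = 1" "s \<in> S2" for s
      using sum_nonneg_eq_0_iff[OF fin2, of u] S(3) that t1 by (auto simp: S2_def)
    have "(\<Sum>s\<in>S1. u s * \<phi> s) \<le> (\<Sum>s\<in>S1. u s * (fx - fb))"
    proof (cases "t = 0")
      case True then show ?thesis using u1 by simp
    next
      case False then show ?thesis
      using A1 S(3) by (intro sum_mono mult_left_mono) (auto simp: S1_def)
    qed
    moreover have "(\<Sum>s\<in>S2. u s * \<phi> s) \<le> (\<Sum>s\<in>S2. u s * (gx - gb))"
    proof (cases "t = 1")
      case True then show ?thesis using u2 by simp
    next
      case False then show ?thesis
      using B1 S(3) by (intro sum_mono mult_left_mono) (auto simp: S2_def)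
    qed
    ultimately have "(\<Sum>s\<in>S. u s * \<phi> s) \<le> t * (fx - fb) + (1 - t) * (gx - gb)"
      using split[of "\<lambda>s. u s * \<phi> s"] t1 by (simp add: t_def sum_distrib_right[symmetric])
    with lin show "0 \<le> t * (fx - fb) + (1 - t) * (gx - gb)" by simp
  qed
qed

theorem mainTheorem16:
  fixes a :: "'x::{real_inner,complete_space} \<Rightarrow> 'y::{real_inner,complete_space} \<Rightarrow> ereal"
  assumes no_minf: "\<And>x y. a x y \<noteq> -\<infinity>"
    and prop_x: "\<And>y. proper_fun (\<lambda>x. a x y)"
    and lsc_x: "\<And>y. lsc (\<lambda>x. a x y)"
    and para_x: "\<And>y. paraconvex (\<lambda>x. a x y)"
    and conc_y: "\<And>x. ext_concave (\<lambda>y. a x y)"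
    and beta_fin: "(INF x. SUP y. a x y) < \<infinity>"
    and xb: "xb \<in> interior (ext_dom (\<lambda>x. a x y1)) \<inter> interior (ext_dom (\<lambda>x. a x y2))"
    and ge1: "a xb y1 \<ge> (INF x. SUP y. a x y)"
    and ge2: "a xb y2 \<ge> (INF x. SUP y. a x y)"
    and zs: "ZS0 (\<lambda>x. a x y1) (\<lambda>x. a x y2) xb"
  shows "(SUP y. INF x. a x y) = (INF x. SUP y. a x y)"
proof (rule antisym)
  show "(SUP y. INF x. a x y) \<le> (INF x. SUP y. a x y)"
    by (intro SUP_least INF_greatest) (meson INF_lower UNIV_I SUP_upper order_trans)
next
  let ?\<beta> = "INF x. SUP y. a x y"
  have "xb \<in> ext_dom (\<lambda>x. a x y1)" "xb \<in> ext_dom (\<lambda>x. a x y2)"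
    using xb interior_subset by blast+
  then obtain fb gb where fb: "a xb y1 = ereal fb" and gb: "a xb y2 = ereal gb"
    using no_minf by (metis ext_dom_def mem_Collect_eq less_ereal.simps(2) ereal_cases
        ereal_less_PInfty)
  obtain t where t: "0 \<le> t" "t \<le> 1" and key: "\<And>x fx gx. (t \<noteq> 0 \<Longrightarrow> a x y1 = ereal fx) \<Longrightarrow> (t \<noteq> 1 \<Longrightarrow> a x y2 = ereal gx)
            \<Longrightarrow> 0 \<le> t * (fx - fb) + (1 - t) * (gx - gb)"
    using zs_key[OF fb gb zs] by blast
  define yb where "yb = t *\<^sub>R y1 + (1 - t) *\<^sub>R y2"
  have comb: "?\<beta> \<le> ereal (t * fb + (1 - t) * gb)"
  proof (cases ?\<beta>)
    case (real r)
    then have "r \<le> fb" "r \<le> gb" using ge1 ge2 fb gb by auto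
    then have "t * r + (1 - t) * r \<le> t * fb + (1 - t) * gb"
      using t by (intro add_mono mult_left_mono) auto
    then show ?thesis using real by (simp add: algebra_simps)
  qed (use beta_fin in auto)
  have "?\<beta> \<le> a x yb" for x
  proof (cases "t = 0 \<or> t = 1")
    case True
    show ?thesis
    proof (cases "t = 0")
      case t0: True
      show ?thesis
      proof (cases "a x y2 = \<infinity>")
        case True then show ?thesis using t0 by (simp add: yb_def)
      next
        case False
        then obtain gx where gx: "a x y2 = ereal gx" using no_minf by (meson ereal_cases)
        have "0 \<le> t * (0 - fb) + (1 - t) * (gx - gb)" by (rule key) (use t0 gx in auto)
        then have "gb \<le> gx" using t0 by simp
        then show ?thesis using ge2 gb gx t0 by (auto simp: yb_def intro: order_trans)
      qed
    next
      case t1: False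
      then have t1: "t = 1" using True by simp
      show ?thesis
      proof (cases "a x y1 = \<infinity>")
        case True then show ?thesis using t1 by (simp add: yb_def)
      next
        case False
        then obtain fx where fx: "a x y1 = ereal fx" using no_minf by (meson ereal_cases)
        have "0 \<le> t * (fx - fb) + (1 - t) * (0 - gb)" by (rule key) (use t1 fx in auto)
        then have "fb \<le> fx" using t1 by simp
        then show ?thesis using ge1 fb fx t1 by (auto simp: yb_def intro: order_trans)
      qed
    qed
  next
    case False
    then have tt: "0 < t" "t < 1" using t by auto
    then have ineq: "ereal t * a x y1 + ereal (1 - t) * a x y2 \<le> a x yb"
      using conc_y[of x] unfolding ext_concave_def yb_def by blast
    show ?thesis
    proof (cases "a x y1 = \<infinity> \<or> a x y2 = \<infinity>")
      case True
      have e: "ereal t * a x y1 + ereal (1 - t) * a x y2 = \<infinity>"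
        using True tt no_minf[of x y1] no_minf[of x y2]
        by (cases "a x y1"; cases "a x y2") auto
      have "a x yb = \<infinity>" using ineq unfolding e by simp
      then show ?thesis by simp
    next
      case False
      then obtain fx gx where fx: "a x y1 = ereal fx" and gx: "a x y2 = ereal gx"
        using no_minf by (meson ereal_cases)
      have k: "0 \<le> t * (fx - fb) + (1 - t) * (gx - gb)" by (rule key) (use fx gx in auto)
      have "t * fb + (1 - t) * gb \<le> t * fx + (1 - t) * gx" using k by (simp add: algebra_simps)
      then have c2: "?\<beta> \<le> ereal (t * fx + (1 - t) * gx)" using comb
        by (meson ereal_less_eq(3) order_trans)
      then show ?thesis using ineq fx gx by (auto intro: order_trans)
    qed
  qed
  then have "?\<beta> \<le> (INF x. a x yb)" by (rule INF_greatest)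
  also have "\<dots> \<le> (SUP y. INF x. a x y)" by (rule SUP_upper) simp
  finally show "?\<beta> \<le> (SUP y. INF x. a x y)" .
qed

end
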